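(* Let $d\geq1$ be an integer, $j\in\{0,\dots,d-1\}$, $\beta>0$, and let $\kappa,\Delta,\gamma,\delta>0$ satisfy $$\kappa^2=\frac{\gamma^2}{\lambda(\gamma,\delta)}=\tanh\beta,\qquad \Delta^2=\frac{\delta^2}{\lambda(\gamma,\delta)}\Big(1-\frac{\gamma^2\delta^2}{2\lambda(\gamma,\delta)}\Big)^{-2}=\sinh\beta\cosh\beta,\qquad \gamma^2=\delta^2=2\tanh\frac{\beta}{2},$$ where $\lambda(\gamma,\delta)=1+\frac{\gamma^2\delta^2}{4}$. Then $$\hat S\big(\ln\sqrt{1+\kappa^2\Delta^2}\big)|j^{(1)}_{\kappa,\Delta}\rangle=|j^{(2)}_{\gamma,\delta}\rangle=|j^{(3)}_\beta\rangle.$$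
   Context: Units $\hbar=1$. $\hat q,\hat p$ are the canonical position and momentum operators of a single bosonic mode, $[\hat q,\hat p]=i$; $|q\rangle_{\hat q}$ are generalized position eigenstates with ${}_{\hat q}\langle q|q'\rangle_{\hat q}=\delta(q-q')$. $\hat a=(\hat q+i\hat p)/\sqrt2$, $\hat n=\hat a^\dagger\hat a$, $|0\rangle_f$ is the vacuum with ${}_{\hat q}\langle q|0\rangle_f=\pi^{-1/4}e^{-q^2/2}$. $\hat X(r)=e^{-ir\hat p}$, $\hat Z(r)=e^{ir\hat q}$, $\hat V(\mathbf r)=e^{-ir_pr_q/2}\hat Z(r_p)\hat X(r_q)$ for $\mathbf r=(r_p,r_q)$. Squeezing operator $\hat S(\xi)=\exp(i\xi(\hat q\hat p+\hat p\hat q)/2)$ ($\xi\in\mathbb R$), which satisfies $\hat S^\dagger(\xi)\hat q\hat S(\xi)=e^{-\xi}\hat q$, $\hat S^\dagger(\xi)\hat p\hat S(\xi)=e^{\xi}\hat p$. With $\alpha_d=\sqrt{2\pi/d}$: ideal GKP state $|j^{(\mathrm{ideal})}\rangle=\sqrt{\alpha_d d}\sum_{s\in\mathbb Z}|\alpha_d(ds+j)\rangle_{\hat q}$ (non-normalizable). Approximate GKP states: $|j^{(1)}_{\kappa,\Delta}\rangle=(N^{(1)}_{\kappa,\Delta,j})^{-1/2}\sum_{s\in\mathbb Z}e^{-\frac12\kappa^2\alpha_d^2(ds+j)^2}\hat X(\alpha_d(ds+j))\hat S(-\ln\Delta)|0\rangle_f$ ($\kappa,\Delta>0$); $|j^{(2)}_{\gamma,\delta}\rangle=(N^{(2)}_{\gamma,\delta,j})^{-1/2}\iint\frac{dr_1dr_2}{2\pi\gamma\delta}e^{-\frac{r_1^2}{2\gamma^2}-\frac{r_2^2}{2\delta^2}}\hat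 V((r_1,r_2))|j^{(\mathrm{ideal})}\rangle$ ($0<\gamma\delta<2$); $|j^{(3)}_\beta\rangle=(N^{(3)}_{\beta,j})^{-1/2}e^{-\beta(\hat n+1/2)}|j^{(\mathrm{ideal})}\rangle$ ($\beta>0$); where each $N^{(\cdot)}>0$ is the constant making the state unit-norm. *)

theory Defs
  imports "HOL-Analysis.Analysis"
begin

text \<open>Single bosonic mode, hbar = 1. States are represented by their position-space
wavefunctions psi(q) = <q|psi>, i.e. functions real => complex.  Two states are equal
iff their wavefunctions agree (all wavefunctions here are continuous).\<close>

type_synonym wavefun = "real \<Rightarrow> complex"

definition alpha_d :: "nat \<Rightarrow> real" where
  "alpha_d d = sqrt (2 * pi / real d)"

definition gkp_pt :: "nat \<Rightarrow> nat \<Rightarrow> int \<Rightarrow> real" where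
  "gkp_pt d j s = alpha_d d * (real d * real_of_int s + real j)"

definition vac :: wavefun where
  "vac q = complex_of_real (pi powr (-1/4) * exp (- q\<^sup>2 / 2))"

text \<open>Position shift X(r) = exp(-i r p): (X(r) psi)(q) = psi(q - r).\<close>
definition shiftX :: "real \<Rightarrow> wavefun \<Rightarrow> wavefun" where
  "shiftX r psi = (\<lambda>q. psi (q - r))"

text \<open>Squeezing S(xi) = exp(i xi (qp+pq)/2): (S(xi) psi)(q) = e^{xi/2} psi(e^xi q),
  so that S^dagger q S = e^{-xi} q and S^dagger p S = e^{xi} p.\<close>
definition squeeze :: "real \<Rightarrow> wavefun \<Rightarrow> wavefun" where
  "squeeze xi psi = (\<lambda>q. complex_of_real (exp (xi / 2)) * psi (exp xi * q))"

definition normalize_wf :: "wavefun \<Rightarrow> wavefun" where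
  "normalize_wf psi =
     (\<lambda>q. psi q / complex_of_real (sqrt (LINT x|lborel. (cmod (psi x))\<^sup>2)))"

text \<open>Applying an operator with position kernel K(q,x) = <q|O|x> to the ideal GKP state
  sqrt(alpha_d d) sum_s |alpha_d (d s + j)>.\<close>
definition apply_to_ideal :: "(real \<Rightarrow> real \<Rightarrow> complex) \<Rightarrow> nat \<Rightarrow> nat \<Rightarrow> wavefun" where
  "apply_to_ideal K d j =
     (\<lambda>q. complex_of_real (sqrt (alpha_d d * real d)) * infsum (\<lambda>s::int. K q (gkp_pt d j s)) UNIV)"

text \<open>Position kernel of the smeared displacement  integral f(r_p,r_q) V((r_p,r_q)) dr_p dr_q,
  with V(r) = e^{-i r_p r_q/2} Z(r_p) X(r_q):  <q|V(r)|x> = e^{-i r_p r_q/2} e^{i r_p q} delta(q - x - r_q);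
  the r_q integral against the delta function is carried out (r_q = q - x).\<close>
definition smeared_disp_kernel :: "(real \<Rightarrow> real \<Rightarrow> complex) \<Rightarrow> real \<Rightarrow> real \<Rightarrow> complex" where
  "smeared_disp_kernel f q x =
     (LINT rp|lborel. f rp (q - x) * cis (- rp * (q - x) / 2) * cis (rp * q))"

text \<open>Hermite polynomials and Hermite functions <q|n> (eigenfunctions of n = a^dagger a).\<close>
fun hermite :: "nat \<Rightarrow> real \<Rightarrow> real" where
  "hermite 0 x = 1"
| "hermite (Suc 0) x = 2 * x"
| "hermite (Suc (Suc n)) x = 2 * x * hermite (Suc n) x - 2 * real (Suc n) * hermite n x"

definition hermite_fun :: "nat \<Rightarrow> real \<Rightarrow> real" where
  "hermite_fun n x = hermite n x * exp (- x\<^sup>2 / 2) / sqrt (2 ^ n * fact n * sqrt pi)"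

text \<open>Position kernel of exp(-beta (n + 1/2)) via its spectral decomposition.\<close>
definition number_exp_kernel :: "real \<Rightarrow> real \<Rightarrow> real \<Rightarrow> complex" where
  "number_exp_kernel \<beta> q x =
     complex_of_real (\<Sum>n. exp (- \<beta> * (real n + 1/2)) * hermite_fun n q * hermite_fun n x)"

definition gkp1 :: "nat \<Rightarrow> nat \<Rightarrow> real \<Rightarrow> real \<Rightarrow> wavefun" where
  "gkp1 d j \<kappa> \<Delta> = normalize_wf (\<lambda>q. infsum (\<lambda>s::int.
      complex_of_real (exp (- (\<kappa>\<^sup>2 * (gkp_pt d j s)\<^sup>2) / 2))
      * shiftX (gkp_pt d j s) (squeeze (- ln \<Delta>) vac) q) UNIV)"

definition gkp2 :: "nat \<Rightarrow> nat \<Rightarrow> real \<Rightarrow> real \<Rightarrow> wavefun" where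
  "gkp2 d j \<gamma> \<delta> = normalize_wf (apply_to_ideal (smeared_disp_kernel
      (\<lambda>r1 r2. complex_of_real (exp (- r1\<^sup>2 / (2 * \<gamma>\<^sup>2) - r2\<^sup>2 / (2 * \<delta>\<^sup>2)) / (2 * pi * \<gamma> * \<delta>)))) d j)"

definition gkp3 :: "nat \<Rightarrow> nat \<Rightarrow> real \<Rightarrow> wavefun" where
  "gkp3 d j \<beta> = normalize_wf (apply_to_ideal (number_exp_kernel \<beta>) d j)"

definition lam :: "real \<Rightarrow> real \<Rightarrow> real" where
  "lam \<gamma> \<delta> = 1 + \<gamma>\<^sup>2 * \<delta>\<^sup>2 / 4"

end

theory Submission imports Defs "HOL-Probability.Characteristic_Functions"
begin

abbreviation phi :: "real \<Rightarrow> real" where "phi \<equiv> std_normal_density"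

lemma char_lborel: "(LINT x|lborel. phi x *\<^sub>R iexp (t * x)) = complex_of_real (exp (- (t^2) / 2))"
proof -
  have "char std_normal_distribution t = (LINT x|lborel. phi x *\<^sub>R iexp (t * x))"
    unfolding char_def by (subst integral_density) auto
  then show ?thesis using char_std_normal_distribution by metis
qed

lemma phi_shift: "phi x * exp (b * x) = exp (b^2/2) * normal_density b 1 x"
  by (simp add: normal_density_def std_normal_density_def mult_exp_exp power2_eq_square field_simps)

lemma integrable_phi_exp: "integrable lborel (\<lambda>x. phi x * exp (b * x))"
  unfolding phi_shift by auto

lemma integral_phi_exp: "(LINT x|lborel. phi x * exp (b * x)) = exp (b^2/2)"
  unfolding phi_shift by simp

definition zz :: "real \<Rightarrow> real \<Rightarrow> complex" where
  "zz y u = complex_of_real (2*y) + \<i> * complex_of_real (sqrt 2 * u)"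

definition TT :: "real \<Rightarrow> nat \<Rightarrow> nat \<Rightarrow> complex" where
  "TT y m n = (LINT u|lborel. phi u *\<^sub>R (complex_of_real u ^ m * zz y u ^ n))"

lemma TT_eq: "phi u *\<^sub>R (complex_of_real u ^ m * zz y u ^ Suc n) =
     complex_of_real (2*y) * (phi u *\<^sub>R (complex_of_real u ^ m * zz y u ^ n))
        + (\<i> * complex_of_real (sqrt 2)) * (phi u *\<^sub>R (complex_of_real u ^ Suc m * zz y u ^ n))"
  unfolding zz_def scaleR_conv_of_real by (simp add: algebra_simps)

lemma TT_int: "integrable lborel (\<lambda>u. phi u *\<^sub>R (complex_of_real u ^ m * zz y u ^ n))"
proof (induction n arbitrary: m)
  case 0
  have "integrable lborel (\<lambda>u. complex_of_real (phi u * u ^ m))"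
    by (rule integrable_of_real) (rule integrable_std_normal_moment)
  moreover have e: "(\<lambda>u. phi u *\<^sub>R (complex_of_real u ^ m * zz y u ^ 0)) = (\<lambda>u. complex_of_real (phi u * u ^ m))"
    by (simp add: scaleR_conv_of_real)
  ultimately show ?case by simp
next
  case (Suc n)
  show ?case unfolding TT_eq 
    by (intro Bochner_Integration.integrable_add integrable_mult_right Suc.IH)
qed

lemma TT_rec: "TT y m (Suc n) = complex_of_real (2*y) * TT y m n + (\<i> * complex_of_real (sqrt 2)) * TT y (Suc m) n"
  unfolding TT_def TT_eq
  apply (subst Bochner_Integration.integral_add)
    apply (rule integrable_mult_right, rule TT_int)+
  apply (simp only: integral_mult_right_zero)
  done

lemma TT_0: "TT y m 0 = complex_of_real (LINT u|lborel. phi u * u ^ m)"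
proof -
  have e: "(\<lambda>u. phi u *\<^sub>R (complex_of_real u ^ m * zz y u ^ 0)) = (\<lambda>u. complex_of_real (phi u * u ^ m))"
    by (simp add: scaleR_conv_of_real)
  show ?thesis unfolding TT_def e integral_complex_of_real ..
qed


lemma TT_base: "TT y (Suc m) 0 = of_nat m * TT y (m - 1) 0"
proof (cases "even m")
  case True
  then obtain k where k: "m = 2 * k" by (auto elim: evenE)
  have "TT y (Suc m) 0 = 0"
    unfolding TT_0 k using integral_std_normal_moment_odd[of k] by simp
  moreover have "of_nat m * TT y (m - 1) 0 = 0"
  proof (cases k)
    case 0 then show ?thesis using k by simp
  next
    case (Suc k')
    have "m - 1 = 2 * k' + 1" using k Suc by simp
    then show ?thesis unfolding TT_0 using integral_std_normal_moment_odd[of k'] by simp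
  qed
  ultimately show ?thesis by simp
next
  case False
  then obtain k where k: "m = 2 * k + 1" by (auto elim: oddE)
  have a: "Suc m = 2 * Suc k" "m - 1 = 2 * k" using k by auto
  have "fact (2 * Suc k) / (2 ^ Suc k * fact (Suc k)) = (real (2*k+1)) * (fact (2 * k) / (2 ^ k * fact k) :: real)"
  proof -
    have f1: "(fact (2 * Suc k) :: real) = (2*k+2)*(2*k+1)*fact(2*k)"
      by (simp add: mult_Suc_right fact_Suc algebra_simps)
    have f2: "(fact (Suc k) :: real) = (k+1) * fact k" by (simp add: fact_Suc algebra_simps)
    have p: "(2::real)^k * fact k > 0" by simp
    have "(2*real k+2)*(2*k+1)*fact(2*k) / (2 ^ Suc k * ((real k+1) * fact k)) = (2*k+1) * fact(2*k) / (2^k * fact k)"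
      using p by (simp add: divide_simps) (simp add: algebra_simps)
    then show ?thesis unfolding f1 f2 by (simp only: of_nat_add of_nat_mult of_nat_numeral of_nat_1 times_divide_eq_right of_nat_fact)
  qed
  then have "complex_of_real (fact (2 * Suc k) / (2 ^ Suc k * fact (Suc k))) = of_nat (2*k+1) * complex_of_real (fact (2 * k) / (2 ^ k * fact k))"
    by (metis of_real_mult of_real_of_nat_eq)
  then show ?thesis
    by (simp only: TT_0 a integral_std_normal_moment_even) (simp only: k)
qed

lemma alg1:
  fixes a b c e Y I S M N :: complex
  assumes "I*I = -1" "S*S = 2" "N*c = N*(Y*b + I*S*e)"
  shows "Y*(M*a + I*S*N*b) + I*S*((M+1)*c + I*S*N*e) = M*(Y*a + I*S*c) + I*S*(N+1)*c"
  using assms by algebra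

lemma TT_ibp: "TT y (Suc m) n = of_nat m * TT y (m - 1) n + \<i> * complex_of_real (sqrt 2) * of_nat n * TT y m (n - 1)"
proof (induction n arbitrary: m)
  case 0
  then show ?case using TT_base[of y m] by simp
next
  case (Suc n)
  have r1: "TT y (Suc m) (Suc n) = complex_of_real (2*y) * TT y (Suc m) n + (\<i> * complex_of_real (sqrt 2)) * TT y (Suc (Suc m)) n"
    by (rule TT_rec)
  have r2: "of_nat m * TT y (m - 1) (Suc n) = of_nat m * (complex_of_real (2*y) * TT y (m-1) n + (\<i> * complex_of_real (sqrt 2)) * TT y m n)"
    by (cases m) (simp_all add: TT_rec)
  have r3: "of_nat n * TT y m n = of_nat n * (complex_of_real (2*y) * TT y m (n-1) + (\<i> * complex_of_real (sqrt 2)) * TT y (Suc m) (n-1))"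
    by (cases n) (simp_all add: TT_rec)
  have I: "\<i> * \<i> = -1" by simp
  have S: "complex_of_real (sqrt 2) * complex_of_real (sqrt 2) = 2"
    by (subst of_real_mult[symmetric]) simp
  have "TT y (Suc m) (Suc n) = of_nat m * TT y (m - 1) (Suc n) + \<i> * complex_of_real (sqrt 2) * of_nat (Suc n) * TT y m n"
    unfolding r1 r2 Suc.IH[of m] Suc.IH[of "Suc m"]
    using alg1[OF I S r3, of "of_nat m" "TT y (m-1) n"]
    by (simp add: algebra_simps)
  then show ?case by simp
qed

lemma TT_hermite: "TT y 0 n = complex_of_real (hermite n y)"
proof -
  have "TT y 0 n = complex_of_real (hermite n y) \<and> TT y 0 (Suc n) = complex_of_real (hermite (Suc n) y)"
  proof (induction n)
    case 0
    have t0: "TT y 0 0 = 1" unfolding TT_0 by simp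
    have "TT y 1 0 = 0" using TT_base[of y 0] by simp
    then show ?case using TT_rec[of y 0 0] t0 by simp
  next
    case (Suc n)
    have I: "\<i> * \<i> = -1" by simp
    have S: "complex_of_real (sqrt 2) * complex_of_real (sqrt 2) = 2"
      by (subst of_real_mult[symmetric]) simp
    have "TT y 0 (Suc (Suc n)) = complex_of_real (2*y) * TT y 0 (Suc n) + (\<i> * complex_of_real (sqrt 2)) * TT y 1 (Suc n)"
      using TT_rec[of y 0 "Suc n"] by simp
    also have "TT y 1 (Suc n) = \<i> * complex_of_real (sqrt 2) * of_nat (Suc n) * TT y 0 n"
      using TT_ibp[of y 0 "Suc n"] by simp
    finally have "TT y 0 (Suc (Suc n)) = complex_of_real (2*y) * complex_of_real (hermite (Suc n) y)
        + (\<i> * \<i>) * (complex_of_real (sqrt 2) * complex_of_real (sqrt 2)) * of_nat (Suc n) * complex_of_real (hermite n y)"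
      using Suc by (simp add: algebra_simps)
    also have "\<dots> = complex_of_real (hermite (Suc (Suc n)) y)"
      unfolding I S by (simp add: algebra_simps)
    finally show ?case using Suc by simp
  qed
  then show ?thesis by simp
qed


lemma char_complex:
  fixes c :: complex
  shows "(LINT u|lborel. phi u *\<^sub>R exp (\<i> * c * complex_of_real u)) = exp (- (c^2) / 2)"
proof -
  define a where "a = Re c"
  define b where "b = Im c"
  have c: "c = complex_of_real a + \<i> * complex_of_real b"
    unfolding a_def b_def by (simp add: complex_eq_iff)
  have pw: "phi u *\<^sub>R exp (\<i> * c * complex_of_real u) =
      complex_of_real (exp (b^2/2)) * (normal_density (-b) 1 u *\<^sub>R iexp (a * u))" for u
  proof -
    have e1: "\<i> * c * complex_of_real u = complex_of_real (-b * u) + \<i> * complex_of_real (a * u)"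
      unfolding c by (simp add: algebra_simps)
    have "exp (\<i> * c * complex_of_real u) = complex_of_real (exp (-b*u)) * iexp (a * u)"
      unfolding e1 exp_add exp_of_real ..
    moreover have "phi u * exp (-b*u) = exp (b^2/2) * normal_density (-b) 1 u"
      using phi_shift[of u "-b"] by simp
    ultimately show ?thesis
      by (simp add: scaleR_conv_of_real algebra_simps flip: of_real_mult)
  qed
  have sh: "(LINT u|lborel. normal_density (-b) 1 u *\<^sub>R iexp (a * u)) =
      (LINT x|lborel. normal_density (-b) 1 (-b + 1 * x) *\<^sub>R iexp (a * (-b + 1 * x)))"
    using lborel_integral_real_affine[of 1 "\<lambda>u. normal_density (-b) 1 u *\<^sub>R iexp (a * u)" "-b"] by simp
  have pw2: "normal_density (-b) 1 (-b + 1 * x) *\<^sub>R iexp (a * (-b + 1 * x)) = iexp (-(a*b)) * (phi x *\<^sub>R iexp (a * x))" for x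
  proof -
    have "normal_density (-b) 1 (-b + 1 * x) = phi x" by (simp add: normal_density_def)
    moreover have "iexp (a * (-b + 1 * x)) = iexp (-(a*b)) * iexp (a * x)"
      by (simp add: algebra_simps flip: exp_add)
    ultimately show ?thesis by simp
  qed
  have "(LINT u|lborel. phi u *\<^sub>R exp (\<i> * c * complex_of_real u)) =
      complex_of_real (exp (b^2/2)) * (iexp (-(a*b)) * complex_of_real (exp (- (a^2) / 2)))"
    unfolding pw integral_mult_right_zero sh pw2 char_lborel ..
  also have "\<dots> = exp (complex_of_real (b^2/2)) * (exp (\<i> * complex_of_real (-(a*b))) * exp (complex_of_real (- (a^2) / 2)))"
    by (simp only: exp_of_real)
  also have "\<dots> = exp (complex_of_real (b^2/2) + (\<i> * complex_of_real (-(a*b)) + complex_of_real (- (a^2) / 2)))"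
    by (simp only: exp_add)
  also have "complex_of_real (b^2/2) + (\<i> * complex_of_real (-(a*b)) + complex_of_real (- (a^2) / 2)) = - (c^2)/2"
    unfolding c by (simp add: power2_eq_square algebra_simps)
  finally show ?thesis .
qed

lemma integrable_phi_exp_abs: "integrable lborel (\<lambda>x. phi x * exp (c * \<bar>x\<bar>))"
proof (rule Bochner_Integration.integrable_bound)
  show "integrable lborel (\<lambda>x. phi x * exp (c * x) + phi x * exp ((-c) * x))"
    using integrable_phi_exp by (intro Bochner_Integration.integrable_add) 
  show "(\<lambda>x. phi x * exp (c * \<bar>x\<bar>)) \<in> borel_measurable lborel" by measurable
  show "AE x in lborel. norm (phi x * exp (c * \<bar>x\<bar>)) \<le> norm (phi x * exp (c * x) + phi x * exp ((-c) * x))"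
  proof (rule AE_I2)
    fix x
    have "exp (c * \<bar>x\<bar>) \<le> exp (c * x) + exp ((-c) * x)"
      by (cases "x \<ge> 0") (auto simp: add_increasing add_increasing2)
    then have "phi x * exp (c * \<bar>x\<bar>) \<le> phi x * exp (c * x) + phi x * exp ((-c) * x)"
      by (metis distrib_left mult_left_mono normal_density_nonneg)
    then show "norm (phi x * exp (c * \<bar>x\<bar>)) \<le> norm (phi x * exp (c * x) + phi x * exp ((-c) * x))"
      by simp
  qed
qed

lemma integral_phi_exp_abs: "(LINT x|lborel. phi x * exp (c * \<bar>x\<bar>)) \<le> 2 * exp (c^2/2)"
proof -
  have "(LINT x|lborel. phi x * exp (c * \<bar>x\<bar>)) \<le> (LINT x|lborel. phi x * exp (c * x) + phi x * exp ((-c) * x))"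
  proof (rule integral_mono)
    show "integrable lborel (\<lambda>x. phi x * exp (c * x) + phi x * exp ((-c) * x))"
      using integrable_phi_exp by (intro Bochner_Integration.integrable_add) 
    fix x
    have "exp (c * \<bar>x\<bar>) \<le> exp (c * x) + exp ((-c) * x)"
      by (cases "x \<ge> 0") (auto simp: add_increasing add_increasing2)
    then show "phi x * exp (c * \<bar>x\<bar>) \<le> phi x * exp (c * x) + phi x * exp ((-c) * x)"
      by (metis distrib_left mult_left_mono normal_density_nonneg)
  qed (rule integrable_phi_exp_abs)
  also have "\<dots> = 2 * exp (c^2/2)"
    using integrable_phi_exp[of c] integrable_phi_exp[of "-c"] integral_phi_exp[of c] integral_phi_exp[of "-c"]
    by (subst Bochner_Integration.integral_add) auto
  finally show ?thesis .
qed

lemma integrable_gauss: "(c::real) > 0 \<Longrightarrow> integrable lborel (\<lambda>u. exp (- c * u^2))"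
proof -
  assume c: "c > 0"
  define s where "s = 1 / sqrt (2 * c)"
  have "exp (- c * u^2) = sqrt (2 * pi * s^2) * normal_density 0 s u" for u
    using c unfolding s_def normal_density_def by (simp add: power_divide real_sqrt_mult power_mult_distrib)
  then have eq: "(\<lambda>u. exp (- c * u^2)) = (\<lambda>u. sqrt (2 * pi * s^2) * normal_density 0 s u)" by auto
  show ?thesis unfolding eq by (rule integrable_mult_right, rule integrable_normal_density) (use c in \<open>simp add: s_def\<close>)
qed

lemma integrable_gauss_abs: "(a::real) > 0 \<Longrightarrow> integrable lborel (\<lambda>u. exp (- a * u^2 + (b::real) * \<bar>u\<bar>))"
proof -
  assume a: "a > 0"
  show ?thesis
  proof (rule Bochner_Integration.integrable_bound)
    show "integrable lborel (\<lambda>u. exp (b^2 / (2*a)) * exp (- (a/2) * u^2))"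
      using integrable_gauss[of "a/2"] a by simp
    show "(\<lambda>u. exp (- a * u^2 + b * \<bar>u\<bar>)) \<in> borel_measurable lborel" by measurable
    show "AE x in lborel. norm (exp (- a * x^2 + b * \<bar>x\<bar>)) \<le> norm (exp (b^2 / (2*a)) * exp (- (a/2) * x^2))"
    proof (rule AE_I2)
      fix x
      have "0 \<le> (a/2) * (\<bar>x\<bar> - b/a)^2" using a by simp
      moreover have "(a/2) * (\<bar>x\<bar> - b/a)^2 = (a/2)*x^2 - b*\<bar>x\<bar> + b^2/(2*a)"
        using a by (simp add: power2_eq_square field_simps)
      ultimately have "- a * x^2 + b * \<bar>x\<bar> \<le> b^2 / (2*a) + (- (a/2) * x^2)"
        by linarith
      then show "norm (exp (- a * x^2 + b * \<bar>x\<bar>)) \<le> norm (exp (b^2 / (2*a)) * exp (- (a/2) * x^2))"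
        by (simp flip: exp_add)
    qed
  qed
qed


lemma norm_exp_partial:
  fixes x :: complex
  shows "norm (\<Sum>n<N. x^n /\<^sub>R fact n) \<le> exp (norm x)"
proof -
  have "norm (\<Sum>n<N. x^n /\<^sub>R fact n) \<le> (\<Sum>n<N. norm (x^n /\<^sub>R fact n))"
    by (rule norm_sum)
  also have "\<dots> = (\<Sum>n<N. norm x^n /\<^sub>R fact n)"
    by (simp add: norm_power)
  also have "\<dots> \<le> (\<Sum>n. norm x^n /\<^sub>R fact n)"
    using exp_converges[of "norm x"] by (intro sum_le_suminf) (auto simp: sums_iff)
  also have "\<dots> = exp (norm x)"
    using exp_converges[of "norm x"] by (simp add: sums_iff)
  finally show ?thesis .
qed

lemma zz_measurable[measurable]: "(\<lambda>u. zz y u) \<in> borel_measurable borel"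
  unfolding zz_def by measurable

lemma zz_norm_sq: "(norm (zz y u))^2 = 4 * y^2 + 2 * u^2"
  unfolding zz_def cmod_power2 by (simp add: power_mult_distrib)

lemma zz_norm: "norm (zz y u) \<le> 2 * \<bar>y\<bar> + sqrt 2 * \<bar>u\<bar>"
proof -
  have "norm (zz y u) \<le> norm (complex_of_real (2*y)) + norm (\<i> * complex_of_real (sqrt 2 * u))"
    unfolding zz_def by (rule norm_triangle_ineq)
  then show ?thesis by (simp add: abs_mult norm_mult)
qed

lemma zz_t: "t * zz y u = 2 * complex_of_real y * t + \<i> * (complex_of_real (sqrt 2) * t) * complex_of_real u"
  unfolding zz_def by (simp add: algebra_simps)

lemma hermite_gen:
  fixes t :: complex
  shows "(\<lambda>n. (t^n * complex_of_real (hermite n y)) /\<^sub>R fact n) sums exp (2 * complex_of_real y * t - t^2)"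
proof -
  define f where "f n u = phi u *\<^sub>R ((t * zz y u)^n /\<^sub>R fact n)" for n u
  define F where "F u = phi u *\<^sub>R exp (t * zz y u)" for u
  define W where "W u = exp (norm t * (2 * \<bar>y\<bar>)) * (phi u * exp ((norm t * sqrt 2) * \<bar>u\<bar>))" for u
  have f_eq: "f n u = (t^n /\<^sub>R fact n) * (phi u *\<^sub>R (complex_of_real u ^ 0 * zz y u ^ n))" for n u
    unfolding f_def by (simp add: power_mult_distrib scaleR_conv_of_real algebra_simps)
  have int_f: "integrable lborel (f n)" for n
    unfolding f_eq[abs_def] by (rule integrable_mult_right) (rule TT_int)
  have I_f: "integral\<^sup>L lborel (f n) = (t^n * complex_of_real (hermite n y)) /\<^sub>R fact n" for n
    unfolding f_eq[abs_def] integral_mult_right_zero TT_def[symmetric] TT_hermite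
    by (simp add: scaleR_conv_of_real)
  have lim: "(\<lambda>N. \<Sum>n<N. f n u) \<longlonglongrightarrow> F u" for u
  proof -
    have "(\<lambda>N. \<Sum>n<N. (t * zz y u)^n /\<^sub>R fact n) \<longlonglongrightarrow> exp (t * zz y u)"
      using exp_converges[of "t * zz y u"] by (simp add: sums_def)
    then have "(\<lambda>N. phi u *\<^sub>R (\<Sum>n<N. (t * zz y u)^n /\<^sub>R fact n)) \<longlonglongrightarrow> F u"
      unfolding F_def by (intro tendsto_scaleR tendsto_const)
    then show ?thesis unfolding f_def scaleR_sum_right .
  qed
  have bound: "norm (\<Sum>n<N. f n u) \<le> W u" for N u
  proof -
    have "norm (\<Sum>n<N. f n u) = phi u * norm (\<Sum>n<N. (t * zz y u)^n /\<^sub>R fact n)"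
      unfolding f_def scaleR_sum_right[symmetric] by simp
    also have "\<dots> \<le> phi u * exp (norm (t * zz y u))"
      by (intro mult_left_mono norm_exp_partial) simp
    also have "\<dots> \<le> phi u * exp (norm t * (2 * \<bar>y\<bar> + sqrt 2 * \<bar>u\<bar>))"
      by (intro mult_left_mono exp_mono) (auto simp: norm_mult intro!: mult_left_mono zz_norm)
    also have "\<dots> = W u"
      unfolding W_def by (simp add: algebra_simps flip: exp_add)
    finally show ?thesis .
  qed
  have intW: "integrable lborel W"
    unfolding W_def by (intro integrable_mult_right integrable_phi_exp_abs)
  have conv: "(\<lambda>N. integral\<^sup>L lborel (\<lambda>u. \<Sum>n<N. f n u)) \<longlonglongrightarrow> integral\<^sup>L lborel F"
  proof (rule integral_dominated_convergence[where w=W])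
    show "F \<in> borel_measurable lborel" unfolding F_def by measurable
    show "(\<lambda>u. \<Sum>n<N. f n u) \<in> borel_measurable lborel" for N unfolding f_def by measurable
    show "integrable lborel W" by (rule intW)
    show "AE x in lborel. (\<lambda>N. \<Sum>n<N. f n x) \<longlonglongrightarrow> F x" using lim by simp
    show "AE x in lborel. norm (\<Sum>n<N. f n x) \<le> W x" for N using bound by simp
  qed
  have "integral\<^sup>L lborel (\<lambda>u. \<Sum>n<N. f n u) = (\<Sum>n<N. (t^n * complex_of_real (hermite n y)) /\<^sub>R fact n)" for N
    by (subst Bochner_Integration.integral_sum) (auto simp: int_f I_f)
  with conv have s: "(\<lambda>n. (t^n * complex_of_real (hermite n y)) /\<^sub>R fact n) sums integral\<^sup>L lborel F"
    by (simp add: sums_def)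
  have Feq: "F = (\<lambda>u. exp (2 * complex_of_real y * t) * (phi u *\<^sub>R exp (\<i> * (complex_of_real (sqrt 2) * t) * complex_of_real u)))"
    unfolding F_def zz_t by (rule ext) (simp add: exp_add)
  have "integral\<^sup>L lborel F = exp (2 * complex_of_real y * t) * exp (- ((complex_of_real (sqrt 2) * t)^2) / 2)"
    unfolding Feq integral_mult_right_zero char_complex ..
  also have "\<dots> = exp (2 * complex_of_real y * t - t^2)"
  proof -
    have s2: "(complex_of_real (sqrt 2))^2 = 2" by (subst of_real_power[symmetric]) simp
    have ct: "(complex_of_real (sqrt 2) * t)^2 = 2 * t^2"
      by (simp add: power_mult_distrib s2)
    have h: "- (2 * t^2) / 2 = - (t^2)" by simp
    show ?thesis unfolding ct by (simp only: h exp_add[symmetric] diff_conv_add_uminus)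
  qed
  finally show ?thesis using s by simp
qed


lemma hermite_partial_bound:
  fixes t :: complex
  shows "norm (\<Sum>n<N. (t^n * complex_of_real (hermite n y)) /\<^sub>R fact n) \<le> 2 * exp (2 * \<bar>y\<bar> * norm t + (norm t)^2)"
proof -
  define f where "f n u = phi u *\<^sub>R ((t * zz y u)^n /\<^sub>R fact n)" for n u
  have f_eq: "f n u = (t^n /\<^sub>R fact n) * (phi u *\<^sub>R (complex_of_real u ^ 0 * zz y u ^ n))" for n u
    unfolding f_def by (simp add: power_mult_distrib scaleR_conv_of_real algebra_simps)
  have int_f: "integrable lborel (f n)" for n
    unfolding f_eq[abs_def] by (rule integrable_mult_right) (rule TT_int)
  have I_f: "integral\<^sup>L lborel (f n) = (t^n * complex_of_real (hermite n y)) /\<^sub>R fact n" for n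
    unfolding f_eq[abs_def] integral_mult_right_zero TT_def[symmetric] TT_hermite
    by (simp add: scaleR_conv_of_real)
  have "(\<Sum>n<N. (t^n * complex_of_real (hermite n y)) /\<^sub>R fact n) = integral\<^sup>L lborel (\<lambda>u. \<Sum>n<N. f n u)"
    by (subst Bochner_Integration.integral_sum) (auto simp: int_f I_f)
  then have "norm (\<Sum>n<N. (t^n * complex_of_real (hermite n y)) /\<^sub>R fact n) \<le> (LINT u|lborel. norm (\<Sum>n<N. f n u))"
    by simp
  also have "\<dots> \<le> (LINT u|lborel. exp (norm t * (2 * \<bar>y\<bar>)) * (phi u * exp ((norm t * sqrt 2) * \<bar>u\<bar>)))"
  proof (rule integral_mono_AE')
    show "integrable lborel (\<lambda>u. exp (norm t * (2 * \<bar>y\<bar>)) * (phi u * exp ((norm t * sqrt 2) * \<bar>u\<bar>)))"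
      by (intro integrable_mult_right integrable_phi_exp_abs)
    show "AE u in lborel. 0 \<le> exp (norm t * (2 * \<bar>y\<bar>)) * (phi u * exp ((norm t * sqrt 2) * \<bar>u\<bar>))"
      by simp
    show "AE u in lborel. norm (\<Sum>n<N. f n u) \<le> exp (norm t * (2 * \<bar>y\<bar>)) * (phi u * exp ((norm t * sqrt 2) * \<bar>u\<bar>))"
    proof (rule AE_I2)
      fix u
      have "norm (\<Sum>n<N. f n u) = phi u * norm (\<Sum>n<N. (t * zz y u)^n /\<^sub>R fact n)"
        unfolding f_def scaleR_sum_right[symmetric] by simp
      also have "\<dots> \<le> phi u * exp (norm (t * zz y u))"
        by (intro mult_left_mono norm_exp_partial) simp
      also have "\<dots> \<le> phi u * exp (norm t * (2 * \<bar>y\<bar> + sqrt 2 * \<bar>u\<bar>))"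
        by (intro mult_left_mono exp_mono) (auto simp: norm_mult intro!: mult_left_mono zz_norm)
      also have "\<dots> = exp (norm t * (2 * \<bar>y\<bar>)) * (phi u * exp ((norm t * sqrt 2) * \<bar>u\<bar>))"
        by (simp add: algebra_simps flip: exp_add)
      finally show "norm (\<Sum>n<N. f n u) \<le> exp (norm t * (2 * \<bar>y\<bar>)) * (phi u * exp ((norm t * sqrt 2) * \<bar>u\<bar>))" .
    qed
  qed
  also have "\<dots> = exp (norm t * (2 * \<bar>y\<bar>)) * (LINT u|lborel. phi u * exp ((norm t * sqrt 2) * \<bar>u\<bar>))"
    by simp
  also have "\<dots> \<le> exp (norm t * (2 * \<bar>y\<bar>)) * (2 * exp ((norm t * sqrt 2)^2/2))"
    by (intro mult_left_mono integral_phi_exp_abs) simp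
  also have "\<dots> = 2 * exp (2 * \<bar>y\<bar> * norm t + (norm t)^2)"
    by (simp add: power_mult_distrib algebra_simps flip: exp_add)
  finally show ?thesis .
qed


lemma mehler_exp_eq:
  fixes w x y u :: real
  shows "2 * complex_of_real y * (complex_of_real (w/2) * zz x u) - (complex_of_real (w/2) * zz x u)^2
    = complex_of_real (2*w*x*y - w^2*x^2 + w^2*u^2/2) + \<i> * complex_of_real (w * sqrt 2 * (y - w*x) * u)"
  unfolding zz_def by (simp add: complex_eq_iff power2_eq_square algebra_simps)

lemma mehler:
  fixes w x y :: real
  assumes w0: "0 \<le> w" and w1: "w < 1"
  shows "(\<lambda>n. complex_of_real ((w/2)^n / fact n * hermite n x * hermite n y)) sums
     complex_of_real (exp ((2*x*y*w - (x^2+y^2)*w^2)/(1-w^2)) / sqrt (1-w^2))"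
proof -
  have w2: "w^2 < 1"
  proof -
    have "w^2 < 1^2" using w0 w1 by (intro power_strict_mono) auto
    then show ?thesis by simp
  qed
  define tt where "tt u = complex_of_real (w/2) * zz x u" for u
  define g where "g n u = phi u *\<^sub>R ((tt u ^ n * complex_of_real (hermite n y)) /\<^sub>R fact n)" for n u
  define G where "G u = phi u *\<^sub>R exp (2 * complex_of_real y * tt u - tt u ^ 2)" for u
  define W where "W u = phi u * (2 * exp (2 * \<bar>y\<bar> * (w * (\<bar>x\<bar> + \<bar>u\<bar>)) + w^2 * (x^2 + u^2/2)))" for u
  have g_eq: "g n u = complex_of_real ((w/2)^n * hermite n y / fact n) * (phi u *\<^sub>R (complex_of_real u ^ 0 * zz x u ^ n))" for n u
    unfolding g_def tt_def by (simp add: power_mult_distrib power_divide scaleR_conv_of_real field_simps)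
  have int_g: "integrable lborel (g n)" for n
    unfolding g_eq[abs_def] by (rule integrable_mult_right) (rule TT_int)
  have I_g: "integral\<^sup>L lborel (g n) = complex_of_real ((w/2)^n / fact n * hermite n x * hermite n y)" for n
    unfolding g_eq[abs_def] integral_mult_right_zero TT_def[symmetric] TT_hermite
    by (simp flip: of_real_mult)
  have lim: "(\<lambda>N. \<Sum>n<N. g n u) \<longlonglongrightarrow> G u" for u
  proof -
    have "(\<lambda>N. \<Sum>n<N. (tt u ^ n * complex_of_real (hermite n y)) /\<^sub>R fact n) \<longlonglongrightarrow> exp (2 * complex_of_real y * tt u - tt u ^ 2)"
      using hermite_gen[of "tt u" y] by (simp add: sums_def)
    then have "(\<lambda>N. phi u *\<^sub>R (\<Sum>n<N. (tt u ^ n * complex_of_real (hermite n y)) /\<^sub>R fact n)) \<longlonglongrightarrow> G u"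
      unfolding G_def by (intro tendsto_scaleR tendsto_const)
    then show ?thesis unfolding g_def scaleR_sum_right .
  qed
  have tt_norm: "norm (tt u) \<le> w * (\<bar>x\<bar> + \<bar>u\<bar>)" for u
  proof -
    have "norm (tt u) = (w/2) * norm (zz x u)" unfolding tt_def using w0 by (simp add: norm_mult)
    also have "\<dots> \<le> (w/2) * (2 * \<bar>x\<bar> + sqrt 2 * \<bar>u\<bar>)"
      using w0 by (intro mult_left_mono zz_norm) auto
    also have "\<dots> \<le> (w/2) * (2 * \<bar>x\<bar> + 2 * \<bar>u\<bar>)"
    proof -
      have "sqrt 2 \<le> sqrt (4::real)" by (rule real_sqrt_le_mono) simp
      then have "sqrt 2 \<le> (2::real)" by (simp add: real_sqrt_four)
      then have "sqrt 2 * \<bar>u\<bar> \<le> 2 * \<bar>u\<bar>" by (intro mult_right_mono) auto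
      then show ?thesis using w0 by (intro mult_left_mono) auto
    qed
    finally show ?thesis by (simp add: algebra_simps)
  qed
  have tt_sq: "(norm (tt u))^2 = w^2 * (x^2 + u^2/2)" for u
    unfolding tt_def norm_mult power_mult_distrib zz_norm_sq using w0 by (simp add: power_divide algebra_simps)
  have bound: "norm (\<Sum>n<N. g n u) \<le> W u" for N u
  proof -
    have "norm (\<Sum>n<N. g n u) = phi u * norm (\<Sum>n<N. (tt u ^ n * complex_of_real (hermite n y)) /\<^sub>R fact n)"
      unfolding g_def scaleR_sum_right[symmetric] by simp
    also have "\<dots> \<le> phi u * (2 * exp (2 * \<bar>y\<bar> * norm (tt u) + (norm (tt u))^2))"
      by (intro mult_left_mono hermite_partial_bound) simp
    also have "\<dots> \<le> W u"
      unfolding W_def tt_sq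
      by (intro mult_left_mono exp_mono add_right_mono tt_norm) auto
    finally show ?thesis .
  qed
  have intW: "integrable lborel W"
  proof -
    have "W u = (2 * exp (2 * \<bar>y\<bar> * w * \<bar>x\<bar> + w^2 * x^2) / sqrt (2*pi)) * exp (- ((1 - w^2)/2) * u^2 + (2 * \<bar>y\<bar> * w) * \<bar>u\<bar>)" for u
      unfolding W_def std_normal_density_def
      by (simp add: algebra_simps flip: exp_add) (simp add: field_simps)
    then have eq: "W = (\<lambda>u. (2 * exp (2 * \<bar>y\<bar> * w * \<bar>x\<bar> + w^2 * x^2) / sqrt (2*pi)) * exp (- ((1 - w^2)/2) * u^2 + (2 * \<bar>y\<bar> * w) * \<bar>u\<bar>))"
      by (rule ext)
    have "0 < (1 - w^2)/2" using w2 by simp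
    then show ?thesis unfolding eq by (intro integrable_mult_right integrable_gauss_abs)
  qed
  have conv: "(\<lambda>N. integral\<^sup>L lborel (\<lambda>u. \<Sum>n<N. g n u)) \<longlonglongrightarrow> integral\<^sup>L lborel G"
  proof (rule integral_dominated_convergence[where w=W])
    show "G \<in> borel_measurable lborel" unfolding G_def tt_def by measurable
    show "(\<lambda>u. \<Sum>n<N. g n u) \<in> borel_measurable lborel" for N unfolding g_def tt_def by measurable
    show "integrable lborel W" by (rule intW)
    show "AE x in lborel. (\<lambda>N. \<Sum>n<N. g n x) \<longlonglongrightarrow> G x" using lim by simp
    show "AE x in lborel. norm (\<Sum>n<N. g n x) \<le> W x" for N using bound by simp
  qed
  have "integral\<^sup>L lborel (\<lambda>u. \<Sum>n<N. g n u) = (\<Sum>n<N. complex_of_real ((w/2)^n / fact n * hermite n x * hermite n y))" for N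
    by (subst Bochner_Integration.integral_sum) (auto simp: int_g I_g)
  with conv have s: "(\<lambda>n. complex_of_real ((w/2)^n / fact n * hermite n x * hermite n y)) sums integral\<^sup>L lborel G"
    by (simp add: sums_def)
  define \<rho> where "\<rho> = sqrt (1 - w^2)"
  have rho: "\<rho> > 0" "\<rho>^2 = 1 - w^2"
    using w2 unfolding \<rho>_def by auto
  define C0 where "C0 = 2*w*x*y - w^2*x^2"
  define k where "k = w * sqrt 2 * (y - w*x)"
  have Geq: "G = (\<lambda>u. complex_of_real (exp C0) * (phi (\<rho> * u) *\<^sub>R iexp (k * u)))"
  proof
    fix u
    have e1: "exp (2 * complex_of_real y * tt u - tt u ^ 2) = complex_of_real (exp (C0 + w^2*u^2/2)) * iexp (k * u)"
      unfolding tt_def mehler_exp_eq C0_def k_def by (simp only: exp_add exp_of_real)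
    have e2: "phi u * exp (C0 + w^2*u^2/2) = exp C0 * phi (\<rho> * u)"
      unfolding std_normal_density_def
      by (simp add: power_mult_distrib rho(2) algebra_simps flip: exp_add) (simp add: field_simps)
    show "G u = complex_of_real (exp C0) * (phi (\<rho> * u) *\<^sub>R iexp (k * u))"
      unfolding G_def e1 using e2 by (simp add: scaleR_conv_of_real algebra_simps flip: of_real_mult)
  qed
  have sc: "(LINT v|lborel. phi v *\<^sub>R iexp ((k/\<rho>) * v)) = \<rho> *\<^sub>R (LINT u|lborel. phi (\<rho> * u) *\<^sub>R iexp (k * u))"
    using lborel_integral_real_affine[of \<rho> "\<lambda>v. phi v *\<^sub>R iexp ((k/\<rho>) * v)" 0] rho by simp
  have "integral\<^sup>L lborel G = complex_of_real (exp C0) * ((1/\<rho>) *\<^sub>R complex_of_real (exp (- ((k/\<rho>)^2) / 2)))"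
  proof -
    have h1: "\<rho> *\<^sub>R (LINT u|lborel. phi (\<rho> * u) *\<^sub>R iexp (k * u)) = complex_of_real (exp (- ((k/\<rho>)^2) / 2))"
      by (subst sc[symmetric]) (rule char_lborel)
    have "(LINT u|lborel. phi (\<rho> * u) *\<^sub>R iexp (k * u)) = (1/\<rho>) *\<^sub>R (\<rho> *\<^sub>R (LINT u|lborel. phi (\<rho> * u) *\<^sub>R iexp (k * u)))"
      using rho by simp
    also have "\<dots> = (1/\<rho>) *\<^sub>R complex_of_real (exp (- ((k/\<rho>)^2) / 2))"
      unfolding h1 ..
    finally show ?thesis unfolding Geq integral_mult_right_zero by simp
  qed
  also have "\<dots> = complex_of_real (exp ((2*x*y*w - (x^2+y^2)*w^2)/(1-w^2)) / sqrt (1-w^2))"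
  proof -
    have nz: "1 - w^2 \<noteq> 0" using w2 by simp
    have kk: "k^2 = 2*(w^2*(y-w*x)^2)" by (simp add: k_def power_mult_distrib)
    have k2: "(k/\<rho>)^2 / 2 = (k^2/2)/(1-w^2)" by (simp add: power_divide rho(2))
    have k3: "k^2/2 = w^2*(y-w*x)^2" using kk by simp
    have m: "- ((k/\<rho>)^2) / 2 = - ((k/\<rho>)^2 / 2)" by simp
    have "C0 + (- ((k/\<rho>)^2) / 2) = C0 - w^2*(y-w*x)^2/(1-w^2)"
      unfolding m k2 k3 by simp
    also have "\<dots> = (C0 * (1-w^2) - w^2*(y-w*x)^2)/(1-w^2)"
      using nz by (simp add: diff_divide_distrib)
    also have "C0 * (1-w^2) - w^2*(y-w*x)^2 = 2*x*y*w - (x^2+y^2)*w^2"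
      unfolding C0_def by (simp add: power2_eq_square algebra_simps)
    finally have "C0 + (- ((k/\<rho>)^2) / 2) = (2*x*y*w - (x^2+y^2)*w^2)/(1-w^2)" .
    then have "exp C0 * exp (- ((k/\<rho>)^2) / 2) = exp ((2*x*y*w - (x^2+y^2)*w^2)/(1-w^2))"
      by (simp flip: exp_add)
    then show ?thesis unfolding \<rho>_def[symmetric]
      by (simp add: scaleR_conv_of_real field_simps flip: of_real_mult)
  qed
  finally show ?thesis using s by simp
qed

lemma kernel2:
  fixes \<gamma> \<delta> q x :: real
  assumes g: "\<gamma> > 0" and d: "\<delta> > 0"
  shows "smeared_disp_kernel (\<lambda>r1 r2. complex_of_real (exp (- r1\<^sup>2 / (2 * \<gamma>\<^sup>2) - r2\<^sup>2 / (2 * \<delta>\<^sup>2)) / (2 * pi * \<gamma> * \<delta>))) q x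
   = complex_of_real ((\<gamma> * sqrt (2*pi) / (2*pi*\<gamma>*\<delta>)) * exp (- (q-x)\<^sup>2 / (2*\<delta>\<^sup>2) - \<gamma>\<^sup>2 * (q+x)\<^sup>2 / 8))"
proof -
  define k where "k = (q+x)/2"
  define D where "D = exp (- (q-x)\<^sup>2 / (2*\<delta>\<^sup>2)) / (2*pi*\<gamma>*\<delta>)"
  define E where "E rp = exp (- rp\<^sup>2 / (2*\<gamma>\<^sup>2))" for rp
  have pw: "complex_of_real (exp (- rp\<^sup>2 / (2 * \<gamma>\<^sup>2) - (q-x)\<^sup>2 / (2 * \<delta>\<^sup>2)) / (2 * pi * \<gamma> * \<delta>))
      * cis (- rp * (q - x) / 2) * cis (rp * q)
    = complex_of_real D * (E rp *\<^sub>R iexp (k * rp))" for rp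
  proof -
    have c: "cis (- rp * (q - x) / 2) * cis (rp * q) = iexp (k * rp)"
    proof -
      have "- rp * (q - x) / 2 + rp * q = k * rp" unfolding k_def by (simp add: field_simps)
      then show ?thesis by (subst cis_mult) (simp only: cis_conv_exp)
    qed
    have e: "exp (- rp\<^sup>2 / (2 * \<gamma>\<^sup>2) - (q-x)\<^sup>2 / (2 * \<delta>\<^sup>2)) / (2 * pi * \<gamma> * \<delta>) = D * E rp"
      unfolding D_def E_def by (simp add: exp_diff exp_minus field_simps)
    show ?thesis
      by (simp only: e) (simp only: mult.assoc c scaleR_conv_of_real of_real_mult)
  qed
  have sc: "(LINT rp|lborel. E rp *\<^sub>R iexp (k * rp)) =
     \<gamma> *\<^sub>R (LINT v|lborel. E (0 + \<gamma> * v) *\<^sub>R iexp (k * (0 + \<gamma> * v)))"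
    using lborel_integral_real_affine[of \<gamma> "\<lambda>rp. E rp *\<^sub>R iexp (k * rp)" 0] g by simp
  have pw2: "E (0 + \<gamma> * v) *\<^sub>R iexp (k * (0 + \<gamma> * v)) = sqrt (2*pi) *\<^sub>R (phi v *\<^sub>R iexp ((k*\<gamma>) * v))" for v
  proof -
    have "E (0 + \<gamma> * v) = sqrt (2*pi) * phi v"
      unfolding std_normal_density_def E_def using g by (simp add: power_mult_distrib)
    moreover have "k * (0 + \<gamma> * v) = (k*\<gamma>) * v" by simp
    ultimately show ?thesis by (simp only: scaleR_scaleR)
  qed
  have I: "(LINT rp|lborel. E rp *\<^sub>R iexp (k * rp)) = complex_of_real (\<gamma> * sqrt (2*pi) * exp (- (k*\<gamma>)\<^sup>2/2))"
    unfolding sc pw2 integral_scaleR_right char_lborel by (simp add: scaleR_conv_of_real)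
  have "smeared_disp_kernel (\<lambda>r1 r2. complex_of_real (exp (- r1\<^sup>2 / (2 * \<gamma>\<^sup>2) - r2\<^sup>2 / (2 * \<delta>\<^sup>2)) / (2 * pi * \<gamma> * \<delta>))) q x
     = complex_of_real D * complex_of_real (\<gamma> * sqrt (2*pi) * exp (- (k*\<gamma>)\<^sup>2/2))"
  proof -
    have "smeared_disp_kernel (\<lambda>r1 r2. complex_of_real (exp (- r1\<^sup>2 / (2 * \<gamma>\<^sup>2) - r2\<^sup>2 / (2 * \<delta>\<^sup>2)) / (2 * pi * \<gamma> * \<delta>))) q x
      = (LINT rp|lborel. complex_of_real D * (E rp *\<^sub>R iexp (k * rp)))"
      unfolding smeared_disp_kernel_def by (rule Bochner_Integration.integral_cong[OF refl]) (rule pw)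
    then show ?thesis unfolding integral_mult_right_zero I .
  qed
  also have "\<dots> = complex_of_real ((\<gamma> * sqrt (2*pi) / (2*pi*\<gamma>*\<delta>)) * exp (- (q-x)\<^sup>2 / (2*\<delta>\<^sup>2) - \<gamma>\<^sup>2 * (q+x)\<^sup>2 / 8))"
  proof -
    have "D * (\<gamma> * sqrt (2*pi) * exp (- (k*\<gamma>)\<^sup>2/2)) = (\<gamma> * sqrt (2*pi) / (2*pi*\<gamma>*\<delta>)) * (exp (- (q-x)\<^sup>2 / (2*\<delta>\<^sup>2)) * exp (- (k*\<gamma>)\<^sup>2/2))"
      unfolding D_def by simp
    also have "exp (- (q-x)\<^sup>2 / (2*\<delta>\<^sup>2)) * exp (- (k*\<gamma>)\<^sup>2/2) = exp (- (q-x)\<^sup>2 / (2*\<delta>\<^sup>2) - \<gamma>\<^sup>2 * (q+x)\<^sup>2 / 8)"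
    proof -
      have ex1: "- (k*\<gamma>)\<^sup>2/2 = - (\<gamma>\<^sup>2 * (q+x)\<^sup>2 / 8)"
        unfolding k_def by (simp add: power_mult_distrib power_divide)
      show ?thesis by (simp only: ex1 exp_add[symmetric] diff_conv_add_uminus)
    qed
    finally show ?thesis by (simp flip: of_real_mult)
  qed
  finally show ?thesis .
qed

lemma mehler_real:
  fixes w x y :: real
  assumes "0 \<le> w" "w < 1"
  shows "(\<lambda>n. (w/2)^n / fact n * hermite n x * hermite n y) sums
     (exp ((2*x*y*w - (x^2+y^2)*w^2)/(1-w^2)) / sqrt (1-w^2))"
  using mehler[OF assms, of x y] unfolding sums_of_real_iff .

lemma hermite_fun_prod:
  "hermite_fun n q * hermite_fun n x = hermite n q * hermite n x * (exp (- q\<^sup>2 / 2) * exp (- x\<^sup>2 / 2)) / (2 ^ n * fact n * sqrt pi)"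
proof -
  have S: "sqrt (2 ^ n * fact n * sqrt pi) * sqrt (2 ^ n * fact n * sqrt pi) = 2 ^ n * fact n * sqrt pi"
    by simp
  show ?thesis unfolding hermite_fun_def
    by (simp only: times_divide_times_eq S) (simp only: ac_simps)
qed

lemma kernel3:
  fixes \<beta> q x w :: real
  assumes b: "\<beta> > 0" and w: "w = exp (- \<beta>)"
  shows "number_exp_kernel \<beta> q x = complex_of_real ((exp (- \<beta> / 2) / sqrt pi / sqrt (1 - w^2))
     * exp (- (q\<^sup>2 + x\<^sup>2) / 2 + (2*q*x*w - (q\<^sup>2+x\<^sup>2)*w^2)/(1-w^2)))"
proof -
  have w0: "0 \<le> w" using w by simp
  have w1: "w < 1" using w b by simp
  define C where "C = exp (- \<beta> / 2) * (exp (- q\<^sup>2 / 2) * exp (- x\<^sup>2 / 2)) / sqrt pi"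
  have t: "exp (- \<beta> * (real n + 1/2)) * hermite_fun n q * hermite_fun n x = C * ((w/2)^n / fact n * hermite n q * hermite n x)" for n
  proof -
    have e: "exp (- \<beta> * (real n + 1/2)) = exp (- \<beta> / 2) * w ^ n"
    proof -
      have "- \<beta> * (real n + 1/2) = real n * (- \<beta>) + (- \<beta> / 2)" by (simp add: algebra_simps)
      then show ?thesis unfolding w by (simp only: exp_add exp_of_nat_mult) (rule mult.commute)
    qed
    have "exp (- \<beta> * (real n + 1/2)) * hermite_fun n q * hermite_fun n x = exp (- \<beta> * (real n + 1/2)) * (hermite_fun n q * hermite_fun n x)"
      by (rule mult.assoc)
    also have "\<dots> = exp (- \<beta> / 2) * w ^ n * (hermite n q * hermite n x * (exp (- q\<^sup>2 / 2) * exp (- x\<^sup>2 / 2)) / (2 ^ n * fact n * sqrt pi))"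
      by (simp only: e hermite_fun_prod)
    also have "\<dots> = C * ((w/2)^n / fact n * hermite n q * hermite n x)"
      unfolding C_def by (simp add: power_divide field_simps)
    finally show ?thesis .
  qed
  have "(\<lambda>n. C * ((w/2)^n / fact n * hermite n q * hermite n x)) sums
      (C * (exp ((2*q*x*w - (q^2+x^2)*w^2)/(1-w^2)) / sqrt (1-w^2)))"
    by (rule sums_mult) (rule mehler_real[OF w0 w1])
  then have "(\<lambda>n. exp (- \<beta> * (real n + 1/2)) * hermite_fun n q * hermite_fun n x) sums
      (C * (exp ((2*q*x*w - (q^2+x^2)*w^2)/(1-w^2)) / sqrt (1-w^2)))"
    unfolding t .
  then have "number_exp_kernel \<beta> q x = complex_of_real (C * (exp ((2*q*x*w - (q^2+x^2)*w^2)/(1-w^2)) / sqrt (1-w^2)))"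
    unfolding number_exp_kernel_def by (simp add: sums_iff)
  also have "C * (exp ((2*q*x*w - (q^2+x^2)*w^2)/(1-w^2)) / sqrt (1-w^2)) = (exp (- \<beta> / 2) / sqrt pi / sqrt (1 - w^2))
     * exp (- (q\<^sup>2 + x\<^sup>2) / 2 + (2*q*x*w - (q\<^sup>2+x\<^sup>2)*w^2)/(1-w^2))"
  proof -
    have "exp (- q\<^sup>2 / 2) * exp (- x\<^sup>2 / 2) * exp ((2*q*x*w - (q^2+x^2)*w^2)/(1-w^2)) = exp (- (q\<^sup>2 + x\<^sup>2) / 2 + (2*q*x*w - (q\<^sup>2+x\<^sup>2)*w^2)/(1-w^2))"
    proof -
      have "- q\<^sup>2 / 2 + - x\<^sup>2 / 2 = - (q\<^sup>2 + x\<^sup>2) / 2" by simp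
      then show ?thesis by (simp only: exp_add[symmetric])
    qed
    then show ?thesis unfolding C_def by (simp add: field_simps)
  qed
  finally show ?thesis .
qed

lemma w_facts:
  fixes w :: real
  assumes "0 < w" "w < 1"
  shows "1 - w^2 \<noteq> 0" "1 + w^2 \<noteq> 0" "1 - w \<noteq> 0" "1 + w \<noteq> 0" "w \<noteq> 0" "w^2 < 1" "0 < 1 - w^2"
proof -
  have "w^2 < 1^2" using assms by (intro power_strict_mono) auto
  then show "w^2 < 1" "1 - w^2 \<noteq> 0" "0 < 1 - w^2" by auto
  have "0 \<le> w^2" by simp
  then show "1 + w^2 \<noteq> 0" by linarith
  show "1 - w \<noteq> 0" "1 + w \<noteq> 0" "w \<noteq> 0" using assms by auto
qed

lemma core3:
  fixes w iu Q P :: real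
  assumes "iu*(1-w^2) = 1"
  shows "- Q/2 + (2*P*w - Q*w^2)*iu = -((1+w^2)*iu/2)*Q + 2*w*iu*P"
  using assms by algebra

lemma E3:
  fixes w q x :: real
  assumes w0: "0 < w" and w1: "w < 1"
  shows "- (q\<^sup>2 + x\<^sup>2) / 2 + (2*q*x*w - (q\<^sup>2+x\<^sup>2)*w^2)/(1-w^2) = - ((1+w^2)/(2*(1-w^2))) * (q\<^sup>2+x\<^sup>2) + (2*w/(1-w^2)) * q * x"
proof -
  note n = w_facts[OF w0 w1]
  define iu where "iu = inverse (1 - w^2)"
  have hu: "iu * (1-w^2) = 1" unfolding iu_def using n by simp
  have r1: "(2*q*x*w - (q\<^sup>2+x\<^sup>2)*w^2)/(1-w^2) = (2*(q*x)*w - (q\<^sup>2+x\<^sup>2)*w^2)*iu"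
    unfolding iu_def by (simp only: divide_inverse mult.assoc)
  have r2: "(1+w^2)/(2*(1-w^2)) = (1+w^2)*iu/2"
    unfolding iu_def using n by (simp add: field_simps)
  have r3: "(2*w/(1-w^2)) * q * x = 2*w*iu*(q*x)"
    unfolding iu_def using n by (simp add: field_simps)
  show ?thesis unfolding r1 r2 r3 by (rule core3[OF hu])
qed

lemma core1:
  fixes w iu iv iw k2 c iD Q P x y :: real
  assumes "iu*(1-w^2) = 1" "iv*(1+w^2) = 1" "iw*w = 1" "k2 = (1-w^2)*iv" "c = (1+w^2)*iw/2" "iD = 4*w^2*iu*iv"
  shows "- (k2 * x^2) / 2 + - ((c*q - x)^2 * iD) / 2 = - ((1+w^2)*iu/2) * (q^2+x^2) + 2*w*iu*(q*x)"
  using assms by algebra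

lemma E1:
  fixes w k2 D c q x :: real
  assumes w0: "0 < w" and w1: "w < 1" and k: "k2 = (1-w^2)/(1+w^2)" and D: "D > 0" "D^2 = (1-w^2)*(1+w^2)/(4*w^2)"
    and c: "c = (1+w^2)/(2*w)"
  shows "- (k2 * x\<^sup>2) / 2 + - ((1/D * (c*q - x))\<^sup>2) / 2 = - ((1+w^2)/(2*(1-w^2))) * (q\<^sup>2+x\<^sup>2) + (2*w/(1-w^2)) * q * x"
proof -
  note n = w_facts[OF w0 w1]
  define iu where "iu = inverse (1 - w^2)"
  define iv where "iv = inverse (1 + w^2)"
  define iw where "iw = inverse w"
  have hu: "iu * (1-w^2) = 1" unfolding iu_def using n by simp
  have hv: "iv * (1+w^2) = 1" unfolding iv_def using n by simp
  have hw: "iw * w = 1" unfolding iw_def using n by simp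
  have hk: "k2 = (1-w^2)*iv" unfolding k iv_def by (simp only: divide_inverse)
  have hc: "c = (1+w^2)*iw/2" unfolding c iw_def using n by (simp add: field_simps)
  have hD: "inverse (D^2) = 4*w^2*iu*iv" unfolding D(2) iu_def iv_def using n by (simp add: field_simps)
  have r0: "(1/D * (c*q - x))\<^sup>2 = (c*q - x)^2 * inverse (D^2)"
    by (simp add: power_mult_distrib divide_inverse power_inverse)
  have r2: "(1+w^2)/(2*(1-w^2)) = (1+w^2)*iu/2"
    unfolding iu_def using n by (simp add: field_simps)
  have r3: "(2*w/(1-w^2)) * q * x = 2*w*iu*(q*x)"
    unfolding iu_def using n by (simp add: field_simps)
  show ?thesis unfolding r0 r2 r3 by (rule core1[OF hu hv hw hk hc hD])
qed

lemma core2: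
  fixes w iu ia ib g2 id2 P Q :: real
  assumes "iu*(1-w^2) = 1" "ia*(1-w) = 1" "ib*(1+w) = 1" "g2 = 2*(1-w)*ib" "id2 = (1+w)*ia/2"
  shows "- (Q - 2*P) * id2 / 2 - g2 * (Q + 2*P) / 8 = - ((1+w^2)*iu/2) * Q + 2*w*iu*P"
  using assms by algebra

lemma E2:
  fixes w g2 d2 q x :: real
  assumes w0: "0 < w" and w1: "w < 1" and g: "g2 = 2*(1-w)/(1+w)" and d: "d2 = 2*(1-w)/(1+w)"
  shows "- (q-x)\<^sup>2 / (2*d2) - g2 * (q+x)\<^sup>2 / 8 = - ((1+w^2)/(2*(1-w^2))) * (q\<^sup>2+x\<^sup>2) + (2*w/(1-w^2)) * q * x"
proof -
  note n = w_facts[OF w0 w1]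
  define iu where "iu = inverse (1 - w^2)"
  define ia where "ia = inverse (1 - w)"
  define ib where "ib = inverse (1 + w)"
  have hu: "iu * (1-w^2) = 1" unfolding iu_def using n by simp
  have ha: "ia * (1-w) = 1" unfolding ia_def using n by simp
  have hb: "ib * (1+w) = 1" unfolding ib_def using n by simp
  have hg: "g2 = 2*(1-w)*ib" unfolding g ib_def by (simp only: divide_inverse)
  have hd: "inverse d2 = (1+w)*ia/2" unfolding d ia_def using n by (simp add: field_simps)
  have q1: "(q-x)\<^sup>2 = (q\<^sup>2+x\<^sup>2) - 2*(q*x)" by (simp add: power2_eq_square algebra_simps)
  have q2: "(q+x)\<^sup>2 = (q\<^sup>2+x\<^sup>2) + 2*(q*x)" by (simp add: power2_eq_square algebra_simps)
  have r0: "- (q-x)\<^sup>2 / (2*d2) = - ((q\<^sup>2+x\<^sup>2) - 2*(q*x)) * inverse d2 / 2"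
    unfolding q1 by (simp only: divide_inverse inverse_mult_distrib mult_ac)
  have r2: "(1+w^2)/(2*(1-w^2)) = (1+w^2)*iu/2"
    unfolding iu_def using n by (simp add: field_simps)
  have r3: "(2*w/(1-w^2)) * q * x = 2*w*iu*(q*x)"
    unfolding iu_def using n by (simp add: field_simps)
  show ?thesis unfolding r0 r2 r3 q2 hd by (rule core2[OF hu ha hb hg refl])
qed

lemma normalize_scale:
  fixes c :: real
  assumes c: "c > 0"
  shows "normalize_wf (\<lambda>q. complex_of_real c * \<psi> q) = normalize_wf \<psi>"
proof -
  have I: "(LINT x|lborel. (cmod (complex_of_real c * \<psi> x))\<^sup>2) = c\<^sup>2 * (LINT x|lborel. (cmod (\<psi> x))\<^sup>2)"
    using c by (simp add: norm_mult power_mult_distrib)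
  have S: "sqrt (c\<^sup>2 * (LINT x|lborel. (cmod (\<psi> x))\<^sup>2)) = c * sqrt (LINT x|lborel. (cmod (\<psi> x))\<^sup>2)"
    using c by (simp add: real_sqrt_mult)
  show ?thesis
    unfolding normalize_wf_def I S
  proof (rule ext)
    fix q
    have "c \<noteq> 0" using c by simp
    then show "complex_of_real c * \<psi> q / complex_of_real (c * sqrt (LINT x|lborel. (cmod (\<psi> x))\<^sup>2)) =
      \<psi> q / complex_of_real (sqrt (LINT x|lborel. (cmod (\<psi> x))\<^sup>2))"
      by (simp only: of_real_mult) (rule mult_divide_mult_cancel_left, simp)
  qed
qed

lemma squeeze_normalize: "squeeze \<xi> (normalize_wf \<psi>) = normalize_wf (squeeze \<xi> \<psi>)"
proof -
  have I: "(LINT x|lborel. (cmod (squeeze \<xi> \<psi> x))\<^sup>2) = (LINT x|lborel. (cmod (\<psi> x))\<^sup>2)"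
  proof -
    have "(LINT x|lborel. (cmod (\<psi> x))\<^sup>2) = \<bar>exp \<xi>\<bar> *\<^sub>R (LINT x|lborel. (cmod (\<psi> (0 + exp \<xi> * x)))\<^sup>2)"
      by (rule lborel_integral_real_affine) simp
    also have "\<dots> = (LINT x|lborel. exp \<xi> * (cmod (\<psi> (exp \<xi> * x)))\<^sup>2)"
      by simp
    also have "\<dots> = (LINT x|lborel. (cmod (squeeze \<xi> \<psi> x))\<^sup>2)"
    proof -
      have "(cmod (squeeze \<xi> \<psi> x))\<^sup>2 = exp \<xi> * (cmod (\<psi> (exp \<xi> * x)))\<^sup>2" for x
      proof -
        have "(exp (\<xi>/2))\<^sup>2 = exp \<xi>" by (simp flip: exp_of_nat_mult)
        then show ?thesis unfolding squeeze_def by (simp add: norm_mult power_mult_distrib)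
      qed
      then show ?thesis by simp
    qed
    finally show ?thesis by simp
  qed
  show ?thesis unfolding normalize_wf_def I
    by (rule ext) (simp add: squeeze_def)
qed

lemma hyp_facts:
  fixes \<beta> w :: real
  assumes w: "w = exp (- \<beta>)"
  shows "tanh \<beta> = (1 - w^2)/(1 + w^2)" "tanh (\<beta>/2) = (1 - w)/(1 + w)"
    "sinh \<beta> * cosh \<beta> = (1 - w^2)*(1 + w^2)/(4*w^2)"
proof -
  have w2: "exp (- 2 * \<beta>) = w^2" unfolding w by (simp flip: exp_of_nat_mult)
  show "tanh \<beta> = (1 - w^2)/(1 + w^2)" unfolding tanh_real_altdef w2 ..
  have "exp (- 2 * (\<beta>/2)) = w" unfolding w by simp
  then show "tanh (\<beta>/2) = (1 - w)/(1 + w)" unfolding tanh_real_altdef by simp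
  have w0: "w > 0" unfolding w by simp
  have ew: "exp \<beta> * w = 1" unfolding w by (simp flip: exp_add)
  have e: "exp \<beta> = 1/w" using ew w0 by (simp add: eq_divide_eq)
  have "sinh \<beta> * cosh \<beta> = (1/w - w)/2 * ((1/w + w)/2)"
    unfolding sinh_field_def cosh_field_def e by (simp add: w)
  also have "\<dots> = (1 - w^2)*(1 + w^2)/(4*w^2)"
    using w0 by (simp add: field_simps power2_eq_square)
  finally show "sinh \<beta> * cosh \<beta> = (1 - w^2)*(1 + w^2)/(4*w^2)" .
qed


lemma c0_sq:
  fixes w :: real assumes "w \<noteq> 0" "1 + w^2 \<noteq> 0"
  shows "1 + (1-w^2)/(1+w^2) * ((1-w^2)*(1+w^2)/(4*w^2)) = ((1+w^2)/(2*w))^2"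
proof -
  have a: "(1-w^2)/(1+w^2) * ((1-w^2)*(1+w^2)/(4*w^2)) = (1-w^2)*(1-w^2)/(4*w^2)"
    using assms(2) by simp
  have b: "((1+w^2)/(2*w))^2 = (1+w^2)*(1+w^2)/(4*w^2)"
    by (simp add: power_divide power2_eq_square)
  have c: "1 = 4*w^2/(4*w^2)" using assms(1) by simp
  show ?thesis unfolding a b
    apply (subst c)
    apply (simp only: add_divide_distrib[symmetric])
    apply (rule arg_cong[where f="\<lambda>z. z/(4*w^2)"])
    apply (simp add: power2_eq_square algebra_simps)
    done
qed

lemma infsum_scale:
  fixes C :: real
  assumes "\<And>s. F s = complex_of_real C * complex_of_real (H s)"
  shows "infsum F UNIV = complex_of_real C * infsum (\<lambda>s. complex_of_real (H s)) UNIV"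
proof -
  have "F = (\<lambda>s. complex_of_real C * complex_of_real (H s))" using assms by (rule ext)
  then show ?thesis by (simp only: infsum_cmult_right')
qed

lemma R1_term:
  "complex_of_real (exp (- (\<kappa>\<^sup>2 * x\<^sup>2) / 2)) * shiftX x (squeeze (- ln \<Delta>) vac) y
   = complex_of_real (exp (- ln \<Delta> / 2) * pi powr (-1/4)) * complex_of_real (exp (- (\<kappa>\<^sup>2 * x\<^sup>2) / 2) * exp (- ((exp (- ln \<Delta>) * (y - x))\<^sup>2) / 2))"
  unfolding shiftX_def squeeze_def vac_def by (simp only: of_real_mult mult_ac)

theorem theorem1:
  fixes d j :: nat and \<beta> \<kappa> \<Delta> \<gamma> \<delta> :: real
  assumes "d \<ge> 1" and "j < d" and "\<beta> > 0"
    and "\<kappa> > 0" and "\<Delta> > 0" and "\<gamma> > 0" and "\<delta> > 0"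
    and "\<kappa>\<^sup>2 = \<gamma>\<^sup>2 / lam \<gamma> \<delta>" and "\<gamma>\<^sup>2 / lam \<gamma> \<delta> = tanh \<beta>"
    and "\<Delta>\<^sup>2 = \<delta>\<^sup>2 / lam \<gamma> \<delta> / (1 - \<gamma>\<^sup>2 * \<delta>\<^sup>2 / (2 * lam \<gamma> \<delta>))\<^sup>2"
    and "\<delta>\<^sup>2 / lam \<gamma> \<delta> / (1 - \<gamma>\<^sup>2 * \<delta>\<^sup>2 / (2 * lam \<gamma> \<delta>))\<^sup>2 = sinh \<beta> * cosh \<beta>"
    and "\<gamma>\<^sup>2 = \<delta>\<^sup>2" and "\<delta>\<^sup>2 = 2 * tanh (\<beta> / 2)"
  shows "squeeze (ln (sqrt (1 + \<kappa>\<^sup>2 * \<Delta>\<^sup>2))) (gkp1 d j \<kappa> \<Delta>) = gkp2 d j \<gamma> \<delta>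
       \<and> gkp2 d j \<gamma> \<delta> = gkp3 d j \<beta>"
proof -
  define w where "w = exp (- \<beta>)"
  have w0: "0 < w" unfolding w_def by simp
  have w1: "w < 1" unfolding w_def using assms(3) by simp
  note n = w_facts[OF w0 w1]
  note hf = hyp_facts[OF w_def]
  have k2: "\<kappa>\<^sup>2 = (1-w^2)/(1+w^2)" using assms(8,9) hf(1) by simp
  have D2: "\<Delta>\<^sup>2 = (1-w^2)*(1+w^2)/(4*w^2)" using assms(10,11) hf(3) by simp
  have g2: "\<gamma>\<^sup>2 = 2*(1-w)/(1+w)" using assms(12,13) hf(2) by simp
  have d2: "\<delta>\<^sup>2 = 2*(1-w)/(1+w)" using assms(13) hf(2) by simp
  define c0 where "c0 = (1+w^2)/(2*w)"
  have c0pos: "c0 > 0" unfolding c0_def using w0 by (simp add: add_pos_nonneg)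
  have "1 + \<kappa>\<^sup>2 * \<Delta>\<^sup>2 = c0^2"
    unfolding k2 D2 c0_def using c0_sq[OF n(5) n(2)] .
  then have sq: "sqrt (1 + \<kappa>\<^sup>2 * \<Delta>\<^sup>2) = c0" using c0pos by simp
  define \<xi> where "\<xi> = ln (sqrt (1 + \<kappa>\<^sup>2 * \<Delta>\<^sup>2))"
  have e\<xi>: "exp \<xi> = c0" unfolding \<xi>_def sq using c0pos by simp
  define A where "A = (1+w^2)/(2*(1-w^2))"
  define B where "B = 2*w/(1-w^2)"
  define G where "G q = infsum (\<lambda>s::int. complex_of_real (exp (- A * (q\<^sup>2 + (gkp_pt d j s)\<^sup>2) + B * q * gkp_pt d j s))) UNIV" for q
  have ad: "sqrt (alpha_d d * real d) > 0"
    unfolding alpha_d_def using assms(1) by simp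
  define C2 where "C2 = \<gamma> * sqrt (2*pi) / (2*pi*\<gamma>*\<delta>)"
  have C2pos: "C2 > 0" unfolding C2_def using assms(6,7) by simp
  have R2: "apply_to_ideal (smeared_disp_kernel (\<lambda>r1 r2. complex_of_real (exp (- r1\<^sup>2 / (2 * \<gamma>\<^sup>2) - r2\<^sup>2 / (2 * \<delta>\<^sup>2)) / (2 * pi * \<gamma> * \<delta>)))) d j
     = (\<lambda>q. complex_of_real (sqrt (alpha_d d * real d) * C2) * G q)"
  proof (rule ext)
    fix q
    have "infsum (\<lambda>s::int. smeared_disp_kernel (\<lambda>r1 r2. complex_of_real (exp (- r1\<^sup>2 / (2 * \<gamma>\<^sup>2) - r2\<^sup>2 / (2 * \<delta>\<^sup>2)) / (2 * pi * \<gamma> * \<delta>))) q (gkp_pt d j s)) UNIV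
      = complex_of_real C2 * G q"
      unfolding G_def
    proof (rule infsum_scale)
      fix s :: int
      have "- (q - gkp_pt d j s)\<^sup>2 / (2*\<delta>\<^sup>2) - \<gamma>\<^sup>2 * (q + gkp_pt d j s)\<^sup>2 / 8 = - A * (q\<^sup>2 + (gkp_pt d j s)\<^sup>2) + B * q * gkp_pt d j s"
        unfolding A_def B_def using E2[OF w0 w1 g2 d2, of q "gkp_pt d j s"] by simp
      then show "smeared_disp_kernel (\<lambda>r1 r2. complex_of_real (exp (- r1\<^sup>2 / (2 * \<gamma>\<^sup>2) - r2\<^sup>2 / (2 * \<delta>\<^sup>2)) / (2 * pi * \<gamma> * \<delta>))) q (gkp_pt d j s)
        = complex_of_real C2 * complex_of_real (exp (- A * (q\<^sup>2 + (gkp_pt d j s)\<^sup>2) + B * q * gkp_pt d j s))"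
        unfolding kernel2[OF assms(6,7)] C2_def by (simp only: of_real_mult)
    qed
    then show "apply_to_ideal (smeared_disp_kernel (\<lambda>r1 r2. complex_of_real (exp (- r1\<^sup>2 / (2 * \<gamma>\<^sup>2) - r2\<^sup>2 / (2 * \<delta>\<^sup>2)) / (2 * pi * \<gamma> * \<delta>)))) d j q
     = complex_of_real (sqrt (alpha_d d * real d) * C2) * G q"
      unfolding apply_to_ideal_def by (simp only: of_real_mult mult.assoc)
  qed
  have gkp2: "gkp2 d j \<gamma> \<delta> = normalize_wf G"
    unfolding gkp2_def R2 using ad C2pos by (intro normalize_scale) simp
  define C3 where "C3 = exp (- \<beta> / 2) / sqrt pi / sqrt (1 - w^2)"
  have C3pos: "C3 > 0" unfolding C3_def using n by simp
  have R3: "apply_to_ideal (number_exp_kernel \<beta>) d j = (\<lambda>q. complex_of_real (sqrt (alpha_d d * real d) * C3) * G q)"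
  proof (rule ext)
    fix q
    have "infsum (\<lambda>s::int. number_exp_kernel \<beta> q (gkp_pt d j s)) UNIV = complex_of_real C3 * G q"
      unfolding G_def
    proof (rule infsum_scale)
      fix s :: int
      have "- (q\<^sup>2 + (gkp_pt d j s)\<^sup>2) / 2 + (2*q*(gkp_pt d j s)*w - (q\<^sup>2+(gkp_pt d j s)\<^sup>2)*w^2)/(1-w^2) = - A * (q\<^sup>2 + (gkp_pt d j s)\<^sup>2) + B * q * gkp_pt d j s"
        unfolding A_def B_def using E3[OF w0 w1, of q "gkp_pt d j s"] by simp
      then show "number_exp_kernel \<beta> q (gkp_pt d j s) = complex_of_real C3 * complex_of_real (exp (- A * (q\<^sup>2 + (gkp_pt d j s)\<^sup>2) + B * q * gkp_pt d j s))"
        unfolding kernel3[OF assms(3) w_def] C3_def by (simp only: of_real_mult)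
    qed
    then show "apply_to_ideal (number_exp_kernel \<beta>) d j q = complex_of_real (sqrt (alpha_d d * real d) * C3) * G q"
      unfolding apply_to_ideal_def by (simp only: of_real_mult mult.assoc)
  qed
  have gkp3: "gkp3 d j \<beta> = normalize_wf G"
    unfolding gkp3_def R3 using ad C3pos by (intro normalize_scale) simp
  define C1 where "C1 = exp (\<xi>/2) * (exp (- ln \<Delta> / 2) * pi powr (-1/4))"
  have C1pos: "C1 > 0" unfolding C1_def by simp
  define R1 where "R1 q = infsum (\<lambda>s::int. complex_of_real (exp (- (\<kappa>\<^sup>2 * (gkp_pt d j s)\<^sup>2) / 2))
      * shiftX (gkp_pt d j s) (squeeze (- ln \<Delta>) vac) q) UNIV" for q
  have eD: "exp (- ln \<Delta>) = 1/\<Delta>" using assms(5) by (simp add: exp_minus inverse_eq_divide)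
  have SR1: "squeeze \<xi> R1 = (\<lambda>q. complex_of_real C1 * G q)"
  proof (rule ext)
    fix q
    have "R1 (exp \<xi> * q) = complex_of_real (exp (- ln \<Delta> / 2) * pi powr (-1/4)) * G q"
      unfolding R1_def G_def
    proof (rule infsum_scale)
      fix s :: int
      have "- (\<kappa>\<^sup>2 * (gkp_pt d j s)\<^sup>2) / 2 + - ((1/\<Delta> * (c0*q - gkp_pt d j s))\<^sup>2) / 2 = - A * (q\<^sup>2 + (gkp_pt d j s)\<^sup>2) + B * q * gkp_pt d j s"
        unfolding A_def B_def using E1[OF w0 w1 k2 assms(5) D2 c0_def, of "gkp_pt d j s" q] by simp
      then have "exp (- (\<kappa>\<^sup>2 * (gkp_pt d j s)\<^sup>2) / 2) * exp (- ((exp (- ln \<Delta>) * (exp \<xi> * q - gkp_pt d j s))\<^sup>2) / 2)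
          = exp (- A * (q\<^sup>2 + (gkp_pt d j s)\<^sup>2) + B * q * gkp_pt d j s)"
        unfolding eD e\<xi> by (simp only: exp_add[symmetric])
      then show "complex_of_real (exp (- (\<kappa>\<^sup>2 * (gkp_pt d j s)\<^sup>2) / 2)) * shiftX (gkp_pt d j s) (squeeze (- ln \<Delta>) vac) (exp \<xi> * q)
          = complex_of_real (exp (- ln \<Delta> / 2) * pi powr (-1/4)) * complex_of_real (exp (- A * (q\<^sup>2 + (gkp_pt d j s)\<^sup>2) + B * q * gkp_pt d j s))"
        unfolding R1_term by simp
    qed
    then show "squeeze \<xi> R1 q = complex_of_real C1 * G q"
      unfolding squeeze_def C1_def by (simp only: of_real_mult mult.assoc)
  qed
  have gkp1: "squeeze \<xi> (gkp1 d j \<kappa> \<Delta>) = normalize_wf G"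
  proof -
    have "gkp1 d j \<kappa> \<Delta> = normalize_wf R1" unfolding gkp1_def R1_def ..
    then have "squeeze \<xi> (gkp1 d j \<kappa> \<Delta>) = normalize_wf (squeeze \<xi> R1)"
      by (simp only: squeeze_normalize)
    also have "\<dots> = normalize_wf G" unfolding SR1 using C1pos by (rule normalize_scale)
    finally show ?thesis .
  qed
  show ?thesis using gkp1 gkp2 gkp3 unfolding \<xi>_def by simp
qed

end
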